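(* Let $p=p(n)$ and suppose that $d=p(n-1)\ge \log^3 n$. Let $G=(V,E)$ be an $n$-vertex graph such that for some positive constant $c$: (i) for every $S\subseteq V$ with $s=|S|$ and every $r\in\mathbb N$, $\big|\bigcup_{v\in S}N(v,r)\big|\ge c\min\{sd^r,n\}$, and if $sd^r<n/\log n$ then $\big|\bigcup_{v\in S}N(v,r)\big|=(1+o(1))sd^r$; (ii) for every $v\in V$ and $r\in\mathbb N$ with $\sqrt n<d^{r+1}\le\sqrt n\log n$ there is a family $\{W(u)\subseteq S(u,r+1):u\in S(v,r)\}$ of pairwise disjoint sets with $|W(u)|=(1+o(1))d^{r+1}$ for each $u$. Let $X\subseteq V$ be any set of at most $2\sqrt n$ vertices and let $r=r(n)\in\mathbb N$ be such that $d^r\ge \sqrt n\log n$. Let $Y\subseteq V$ be a random set obtained by including each vertex of $V$ independently with probability $C/\sqrt n$, where $C\in\mathbb R$. Then, for a sufficiently large constant $C$, with probability $1-o(n^{-2})$ (over the choice of $Y$) it is possible to assign all the vertices of $X$ to distinct vertices of $Y$ such that each $u\in X$ is assigned to a vertex of $Y$ within distance $r$ of $u$.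
   Context: $\log$ is the natural logarithm. For a vertex $v$ and $r\ge0$, $S(v,r)$ is the set of vertices at distance exactly $r$ from $v$ and $N(v,r)$ is the set of vertices at distance at most $r$ from $v$. Asymptotic notation refers to $n\to\infty$ (the graph depends on $n$), with the $o(\cdot)$ terms uniform in the quantified parameters. *)

theory Defs
  imports Complex_Main "HOL-Library.Landau_Symbols"
begin

definition graph_on :: "nat \<Rightarrow> (nat \<Rightarrow> nat \<Rightarrow> bool) \<Rightarrow> bool" where
  "graph_on n E \<longleftrightarrow> (\<forall>u v. E u v \<longrightarrow> u < n \<and> v < n \<and> u \<noteq> v \<and> E v u)"

definition ball_set :: "nat \<Rightarrow> (nat \<Rightarrow> nat \<Rightarrow> bool) \<Rightarrow> nat \<Rightarrow> nat \<Rightarrow> nat set" where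
  "ball_set n E v r = {w. w < n \<and> (\<exists>k\<le>r. (E ^^ k) v w)}"

definition sphere_set :: "nat \<Rightarrow> (nat \<Rightarrow> nat \<Rightarrow> bool) \<Rightarrow> nat \<Rightarrow> nat \<Rightarrow> nat set" where
  "sphere_set n E v r = {w. w < n \<and> (E ^^ r) v w \<and> (\<forall>k<r. \<not> (E ^^ k) v w)}"

definition rand_subset_prob :: "nat set \<Rightarrow> real \<Rightarrow> (nat set \<Rightarrow> bool) \<Rightarrow> real" where
  "rand_subset_prob V q P =
     (\<Sum>Y\<in>Pow V. if P Y then q ^ card Y * (1 - q) ^ (card V - card Y) else 0)"

definition assignable :: "nat \<Rightarrow> (nat \<Rightarrow> nat \<Rightarrow> bool) \<Rightarrow> nat \<Rightarrow> nat set \<Rightarrow> nat set \<Rightarrow> bool" where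
  "assignable n E r X Y \<longleftrightarrow>
     (\<exists>f. inj_on f X \<and> (\<forall>u\<in>X. f u \<in> Y \<and> f u \<in> ball_set n E u r))"

end

theory Submission
  imports Defs "HOL-Real_Asymp.Real_Asymp"
begin


lemma hall:
  fixes A :: "'a \<Rightarrow> 'b set"
  assumes "finite X" "\<forall>u\<in>X. finite (A u)" "\<forall>S\<subseteq>X. card S \<le> card (\<Union>(A ` S))"
  shows "\<exists>f. inj_on f X \<and> (\<forall>u\<in>X. f u \<in> A u)"
  using assms
proof (induction "card X" arbitrary: X A rule: less_induct)
  case less
  note fin = less.prems(1) and finA = less.prems(2) and H = less.prems(3)
  have finU: "finite (\<Union>(A ` S))" if "S \<subseteq> X" for S
    using that fin finA by (meson finite_UN_I finite_subset subsetD)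
  show ?case
  proof (cases "X = {}")
    case True then show ?thesis by auto
  next
    case Xne: False
    show ?thesis
    proof (cases "\<exists>S. S \<subseteq> X \<and> S \<noteq> {} \<and> S \<noteq> X \<and> card (\<Union>(A ` S)) \<le> card S")
      case True
      then obtain S where S: "S \<subseteq> X" "S \<noteq> {}" "S \<noteq> X" "card (\<Union>(A ` S)) \<le> card S" by blast
      define U where "U = \<Union>(A ` S)"
      have cU: "card U = card S" using S H U_def by (meson le_antisym)
      have finS: "finite S" using S fin finite_subset by blast
      have lt1: "card S < card X" using S fin by (meson psubsetI psubset_card_mono)
      have fS: "\<forall>u\<in>S. finite (A u)" using finA S by blast
      have HS: "\<forall>T\<subseteq>S. card T \<le> card (\<Union>(A ` T))" using H S by blast
      obtain g where g: "inj_on g S" "\<forall>u\<in>S. g u \<in> A u"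
        using less.hyps[OF lt1 finS fS HS] by blast
      define A' where "A' = (\<lambda>u. A u - U)"
      have lt2: "card (X - S) < card X" using S fin
        by (metis Diff_subset card_Diff_subset finS diff_less card_gt_0_iff finite_subset Xne)
      have H2: "\<forall>T\<subseteq>X - S. card T \<le> card (\<Union>(A' ` T))"
      proof (intro allI impI)
        fix T assume T: "T \<subseteq> X - S"
        have finT: "finite T" using T fin finite_subset by blast
        have disj: "T \<inter> S = {}" using T by blast
        have eq: "\<Union>(A ` (T \<union> S)) = \<Union>(A' ` T) \<union> U" unfolding A'_def U_def by blast
        have d2: "\<Union>(A' ` T) \<inter> U = {}" unfolding A'_def by blast
        have fU: "finite U" unfolding U_def using finU S by blast
        have TX: "T \<subseteq> X" using T by blast
        have sub: "\<Union>(A' ` T) \<subseteq> \<Union>(A ` T)" unfolding A'_def by blast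
        have fA': "finite (\<Union>(A' ` T))" using finite_subset[OF sub finU[OF TX]] .
        have TSX: "T \<union> S \<subseteq> X" using TX S by blast
        have "card T + card S = card (T \<union> S)" using card_Un_disjoint[OF finT finS disj] by simp
        also have "\<dots> \<le> card (\<Union>(A ` (T \<union> S)))" using H TSX by blast
        also have "\<dots> = card (\<Union>(A' ` T)) + card U" unfolding eq using card_Un_disjoint[OF fA' fU d2] by simp
        finally show "card T \<le> card (\<Union>(A' ` T))" using cU by simp
      qed
      obtain h where h: "inj_on h (X - S)" "\<forall>u\<in>X - S. h u \<in> A' u"
        using less.hyps[OF lt2 _ _ H2] fin finA unfolding A'_def by blast
      define f where "f = (\<lambda>u. if u \<in> S then g u else h u)"
      have gU: "\<forall>u\<in>S. g u \<in> U" using g(2) U_def by blast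
      have hU: "\<forall>u\<in>X - S. h u \<notin> U" using h(2) A'_def by blast
      have "inj_on f X"
        unfolding inj_on_def f_def
      proof (intro ballI impI)
        fix x y assume xy: "x \<in> X" "y \<in> X" "(if x \<in> S then g x else h x) = (if y \<in> S then g y else h y)"
        show "x = y"
          using xy g(1) h(1) gU hU unfolding inj_on_def
          by (metis Diff_iff)
      qed
      moreover have "\<forall>u\<in>X. f u \<in> A u" using g(2) h(2) unfolding f_def A'_def by auto
      ultimately show ?thesis by blast
    next
      case False
      then have strict: "\<forall>S. S \<subseteq> X \<and> S \<noteq> {} \<and> S \<noteq> X \<longrightarrow> card S < card (\<Union>(A ` S))"
        by (meson not_le)
      obtain x where x: "x \<in> X" using Xne by blast
      have "{x} \<subseteq> X" using x by blast
      then have "card {x} \<le> card (\<Union>(A ` {x}))" using H by blast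
      then have "card {x} \<le> card (A x)" by simp
      hence "A x \<noteq> {}" by auto
      then obtain y where y: "y \<in> A x" by blast
      define A' where "A' = (\<lambda>u. A u - {y})"
      have lt: "card (X - {x}) < card X" using x fin by (meson card_Diff1_less)
      have H2: "\<forall>T\<subseteq>X - {x}. card T \<le> card (\<Union>(A' ` T))"
      proof (intro allI impI)
        fix T assume T: "T \<subseteq> X - {x}"
        show "card T \<le> card (\<Union>(A' ` T))"
        proof (cases "T = {}")
          case True then show ?thesis by simp
        next
          case False
          have "card T < card (\<Union>(A ` T))" using strict T False x by blast
          moreover have eqy: "\<Union>(A' ` T) = \<Union>(A ` T) - {y}" unfolding A'_def by blast
          moreover have "card (\<Union>(A ` T)) - 1 \<le> card (\<Union>(A ` T) - {y})"
            by (metis card_Diff_singleton_if diff_le_self order_refl)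
          ultimately show ?thesis unfolding eqy by linarith
        qed
      qed
      obtain h where h: "inj_on h (X - {x})" "\<forall>u\<in>X - {x}. h u \<in> A' u"
        using less.hyps[OF lt _ _ H2] fin finA unfolding A'_def by blast
      define f where "f = h(x := y)"
      have "inj_on f X" unfolding f_def
        using h A'_def x by (auto simp: inj_on_def) 
      moreover have "\<forall>u\<in>X. f u \<in> A u" using h(2) y unfolding f_def A'_def by auto
      ultimately show ?thesis by blast
    qed
  qed
qed



lemma rsp_mono:
  assumes "0 \<le> q" "q \<le> 1" "\<forall>Y\<subseteq>V. P Y \<longrightarrow> Q Y"
  shows "rand_subset_prob V q P \<le> rand_subset_prob V q Q"
  unfolding rand_subset_prob_def
  using assms by (intro sum_mono) auto

lemma rsp_union:
  assumes "0 \<le> q" "q \<le> 1" "finite V" "finite I"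
  shows "rand_subset_prob V q (\<lambda>Y. \<exists>i\<in>I. P i Y) \<le> (\<Sum>i\<in>I. rand_subset_prob V q (P i))"
proof -
  define w :: "nat set \<Rightarrow> real" where "w = (\<lambda>Y. q ^ card Y * (1 - q) ^ (card V - card Y))"
  have w0: "w Y \<ge> 0" for Y unfolding w_def using assms by simp
  have "rand_subset_prob V q (\<lambda>Y. \<exists>i\<in>I. P i Y) = (\<Sum>Y\<in>Pow V. if \<exists>i\<in>I. P i Y then w Y else 0)"
    unfolding rand_subset_prob_def w_def by simp
  also have "\<dots> \<le> (\<Sum>Y\<in>Pow V. \<Sum>i\<in>I. if P i Y then w Y else 0)"
  proof (intro sum_mono)
    fix Y assume "Y \<in> Pow V"
    show "(if \<exists>i\<in>I. P i Y then w Y else 0) \<le> (\<Sum>i\<in>I. if P i Y then w Y else 0)"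
    proof (cases "\<exists>i\<in>I. P i Y")
      case True
      then obtain i where i: "i \<in> I" "P i Y" by blast
      have "(if P i Y then w Y else 0) \<le> (\<Sum>i\<in>I. if P i Y then w Y else 0)"
        by (rule member_le_sum) (use i assms w0 in auto)
      then show ?thesis using True i by simp
    next
      case False then show ?thesis using w0 by (simp add: sum_nonneg)
    qed
  qed
  also have "\<dots> = (\<Sum>i\<in>I. \<Sum>Y\<in>Pow V. if P i Y then w Y else 0)"
    by (rule sum.swap)
  also have "\<dots> = (\<Sum>i\<in>I. rand_subset_prob V q (P i))"
    unfolding rand_subset_prob_def w_def by simp
  finally show ?thesis .
qed

lemma sum_pow_weights:
  fixes x y :: real
  assumes "finite B"
  shows "(\<Sum>Z\<in>Pow B. x ^ card Z * y ^ (card B - card Z)) = (x + y) ^ card B"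
proof -
  have "(x + y) ^ card B = (\<Prod>b\<in>B. x + y)" by simp
  also have "\<dots> = (\<Sum>Z\<in>Pow B. (\<Prod>b\<in>Z. x) * (\<Prod>b\<in>B - Z. y))"
    by (rule prod_add[OF assms])
  also have "\<dots> = (\<Sum>Z\<in>Pow B. x ^ card Z * y ^ (card B - card Z))"
    by (intro sum.cong refl) (use assms in \<open>auto simp: card_Diff_subset finite_subset\<close>)
  finally show ?thesis by simp
qed

lemma rsp_exact:
  assumes "finite V" "A \<subseteq> V" "T \<subseteq> A"
  shows "rand_subset_prob V q (\<lambda>Y. Y \<inter> A = T) = q ^ card T * (1 - q) ^ (card A - card T)"
proof -
  define B where "B = V - A"
  define w :: "nat set \<Rightarrow> real" where "w = (\<lambda>Y. q ^ card Y * (1 - q) ^ (card V - card Y))"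
  have finA: "finite A" using assms finite_subset by blast
  have finB: "finite B" using assms B_def by simp
  have finT: "finite T" using assms finA finite_subset by blast
  have "rand_subset_prob V q (\<lambda>Y. Y \<inter> A = T) = (\<Sum>Y\<in>{Y\<in>Pow V. Y \<inter> A = T}. w Y)"
    unfolding rand_subset_prob_def w_def using assms(1) by (simp add: sum.inter_filter[symmetric])
  also have "{Y\<in>Pow V. Y \<inter> A = T} = (\<lambda>Z. T \<union> Z) ` Pow B"
  proof (intro equalityI subsetI)
    fix Y assume "Y \<in> {Y\<in>Pow V. Y \<inter> A = T}"
    then have "Y = T \<union> (Y - A)" "Y - A \<in> Pow B" unfolding B_def by auto
    then show "Y \<in> (\<lambda>Z. T \<union> Z) ` Pow B" by blast
  next
    fix Y assume "Y \<in> (\<lambda>Z. T \<union> Z) ` Pow B"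
    then show "Y \<in> {Y\<in>Pow V. Y \<inter> A = T}" using assms unfolding B_def by auto
  qed
  also have "inj_on (\<lambda>Z. T \<union> Z) (Pow B)"
    unfolding B_def inj_on_def using assms by blast
  then have "(\<Sum>Y\<in>(\<lambda>Z. T \<union> Z) ` Pow B. w Y) = (\<Sum>Z\<in>Pow B. w (T \<union> Z))"
    by (rule sum.reindex[unfolded comp_def])
  also have "\<dots> = (\<Sum>Z\<in>Pow B. q ^ card T * (1 - q) ^ (card A - card T) *
                     (q ^ card Z * (1 - q) ^ (card B - card Z)))"
  proof (intro sum.cong refl)
    fix Z assume Z: "Z \<in> Pow B"
    have finZ: "finite Z" using Z finB finite_subset by blast
    have d: "T \<inter> Z = {}" using Z assms B_def by blast
    have c1: "card (T \<union> Z) = card T + card Z" using card_Un_disjoint[OF finT finZ d] .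
    have cV: "card V = card A + card B" unfolding B_def
      using card_Diff_subset[OF finA assms(2)] card_mono[OF assms(1,2)] by simp
    have cT: "card T \<le> card A" using assms finA card_mono by blast
    have cZ: "card Z \<le> card B" using Z finB card_mono by blast
    have e: "card V - card (T \<union> Z) = (card A - card T) + (card B - card Z)"
      using c1 cV cT cZ by simp
    show "w (T \<union> Z) = q ^ card T * (1 - q) ^ (card A - card T) * (q ^ card Z * (1 - q) ^ (card B - card Z))"
      using e unfolding w_def c1 by (simp add: power_add algebra_simps)
  qed
  also have "\<dots> = q ^ card T * (1 - q) ^ (card A - card T)"
    by (simp add: sum_distrib_left[symmetric] sum_pow_weights[OF finB])
  finally show ?thesis .
qed

lemma one_minus_pow_le_exp:
  fixes x :: real
  assumes "0 \<le> x" "x \<le> 1"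
  shows "(1 - x) ^ m \<le> exp (- x * real m)"
proof -
  have "(1 - x) ^ m \<le> exp (- x) ^ m"
    by (rule power_mono) (use assms exp_ge_add_one_self[of "-x"] in auto)
  also have "\<dots> = exp (- x * real m)" by (simp add: exp_of_nat_mult[symmetric] mult.commute)
  finally show ?thesis .
qed

lemma rsp_tail:
  assumes "0 \<le> q" "q \<le> 1" "finite V" "A \<subseteq> V"
  shows "rand_subset_prob V q (\<lambda>Y. card (Y \<inter> A) < s) \<le> exp (real s) * exp (- q * real (card A) / 2)"
proof -
  define I where "I = {T\<in>Pow A. card T < s}"
  define e where "e = exp (1::real)"
  have e2: "e \<ge> 2" unfolding e_def using exp_ge_add_one_self[of 1] by simp
  have finA: "finite A" using assms finite_subset by blast
  have finI: "finite I" unfolding I_def using finA by simp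
  have "rand_subset_prob V q (\<lambda>Y. card (Y \<inter> A) < s) \<le> rand_subset_prob V q (\<lambda>Y. \<exists>T\<in>I. Y \<inter> A = T)"
    by (rule rsp_mono) (use assms in \<open>auto simp: I_def\<close>)
  also have "\<dots> \<le> (\<Sum>T\<in>I. rand_subset_prob V q (\<lambda>Y. Y \<inter> A = T))"
    by (rule rsp_union) (use assms finI in auto)
  also have "\<dots> = (\<Sum>T\<in>I. q ^ card T * (1 - q) ^ (card A - card T))"
    by (intro sum.cong refl rsp_exact) (use assms in \<open>auto simp: I_def\<close>)
  also have "\<dots> \<le> (\<Sum>T\<in>I. e ^ s * ((q / e) ^ card T * (1 - q) ^ (card A - card T)))"
  proof (intro sum_mono)
    fix T assume T: "T \<in> I"
    have "q ^ card T = e ^ card T * (q / e) ^ card T" using e2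
      by (simp add: power_divide)
    also have "\<dots> \<le> e ^ s * (q / e) ^ card T"
      by (intro mult_right_mono power_increasing) (use T e2 assms in \<open>auto simp: I_def\<close>)
    finally have qT: "q ^ card T \<le> e ^ s * (q / e) ^ card T" .
    show "q ^ card T * (1 - q) ^ (card A - card T) \<le> e ^ s * ((q / e) ^ card T * (1 - q) ^ (card A - card T))"
      using assms mult_right_mono[OF qT, of "(1 - q) ^ (card A - card T)"] by (simp add: mult.assoc)
  qed
  also have "\<dots> \<le> (\<Sum>T\<in>Pow A. e ^ s * ((q / e) ^ card T * (1 - q) ^ (card A - card T)))"
    by (rule sum_mono2) (use finA assms e2 in \<open>auto simp: I_def\<close>)
  also have "\<dots> = e ^ s * (q / e + (1 - q)) ^ card A"
    by (simp add: sum_distrib_left[symmetric] sum_pow_weights[OF finA])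
  finally have step1: "rand_subset_prob V q (\<lambda>Y. card (Y \<inter> A) < s) \<le> e ^ s * (q / e + (1 - q)) ^ card A" .
  have "q / e + (1 - q) = 1 - q * (1 - 1 / e)" by (simp add: field_simps)
  moreover have "(1 - q * (1 - 1 / e)) ^ card A \<le> exp (- (q * (1 - 1 / e)) * real (card A))"
    by (rule one_minus_pow_le_exp) (use assms e2 in \<open>auto simp: mult_le_one\<close>)
  moreover have "exp (- (q * (1 - 1 / e)) * real (card A)) \<le> exp (- q * real (card A) / 2)"
  proof -
    have "1 / e \<le> 1 / 2" using e2 by (simp add: frac_le)
    have "q * real (card A) * (1 / e) \<le> q * real (card A) * (1/2)"
      by (rule mult_left_mono) (use \<open>1 / e \<le> 1 / 2\<close> assms in auto)
    moreover have "q * (1 - 1 / e) * real (card A) = q * real (card A) - q * real (card A) * (1 / e)"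
      by (simp add: algebra_simps)
    ultimately have "q * real (card A) / 2 \<le> q * (1 - 1 / e) * real (card A)"
      by linarith
    then show ?thesis by simp
  qed
  ultimately have step2: "(q / e + (1 - q)) ^ card A \<le> exp (- q * real (card A) / 2)" by (metis order_trans)
  have es: "e ^ s = exp (real s)" unfolding e_def by (simp add: exp_of_nat_mult[symmetric])
  have "e ^ s * (q / e + (1 - q)) ^ card A \<le> e ^ s * exp (- q * real (card A) / 2)"
    by (rule mult_left_mono[OF step2]) (use e2 in simp)
  then show ?thesis using step1 unfolding es by (rule order_trans[rotated])
qed



lemma exp_min_le:
  "exp (x - k * min a b) \<le> exp (x - k * a) + exp (x - k * b)" if "k \<ge> 0" for x k a b :: real
proof (cases "a \<le> b")
  case True then show ?thesis by (simp add: min_def add_increasing2)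
next
  case False then show ?thesis by (simp add: min_def add_increasing)
qed

lemma core:
  fixes n :: nat and E :: "nat \<Rightarrow> nat \<Rightarrow> bool" and X :: "nat set" and r :: nat
    and D c C :: real
  assumes n3: "n \<ge> 3" and q1: "C / sqrt (real n) \<le> 1" and c0: "c > 0" and C0: "C \<ge> 0"
    and cC: "c * C \<ge> 12"
    and X: "X \<subseteq> {..<n}" "real (card X) \<le> 2 * sqrt (real n)"
    and D: "D \<ge> sqrt (real n) * ln (real n)"
    and exp_n: "\<forall>S. S \<subseteq> {..<n} \<longrightarrow>
        real (card (\<Union>v\<in>S. ball_set n E v r)) \<ge> c * min (real (card S) * D) (real n)"
  shows "rand_subset_prob {..<n} (C / sqrt (real n)) (\<lambda>Y. \<not> assignable n E r X Y)
     \<le> (exp (2 * exp 1 * sqrt (real n) / real n ^ 6) - 1) + exp (- 2 * sqrt (real n))"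
proof -
  define q where "q = C / sqrt (real n)"
  define V where "V = {..<n}"
  define NS where "NS = (\<lambda>S. \<Union>v\<in>S. ball_set n E v r)"
  define I where "I = Pow X - {{}}"
  have sn: "sqrt (real n) > 0" using n3 by simp
  have q0: "0 \<le> q" "q \<le> 1" using q1 C0 sn unfolding q_def by auto
  have finV: "finite V" unfolding V_def by simp
  have finX: "finite X" using X(1) finite_subset by blast
  have finI: "finite I" unfolding I_def using finX by simp
  have ballV: "ball_set n E v r \<subseteq> V" for v unfolding ball_set_def V_def by auto
  have NSV: "NS S \<subseteq> V" for S unfolding NS_def using ballV by blast
  have A: "\<exists>S\<in>I. card (Y \<inter> NS S) < card S" if Y: "Y \<subseteq> V" "\<not> assignable n E r X Y" for Y
  proof (rule ccontr)
    assume "\<not> ?thesis"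
    then have H: "\<forall>S\<subseteq>X. card S \<le> card (\<Union>((\<lambda>u. ball_set n E u r \<inter> Y) ` S))"
    proof (intro allI impI)
      fix S assume nt: "\<not> (\<exists>S\<in>I. card (Y \<inter> NS S) < card S)" and S: "S \<subseteq> X"
      show "card S \<le> card (\<Union>((\<lambda>u. ball_set n E u r \<inter> Y) ` S))"
      proof (cases "S = {}")
        case True then show ?thesis by simp
      next
        case False
        then have "S \<in> I" using S unfolding I_def by blast
        then have "card S \<le> card (Y \<inter> NS S)" using nt by (meson not_le)
        moreover have "Y \<inter> NS S = \<Union>((\<lambda>u. ball_set n E u r \<inter> Y) ` S)" unfolding NS_def by blast
        ultimately show ?thesis by simp
      qed
    qed
    have "\<forall>u\<in>X. finite (ball_set n E u r \<inter> Y)" using ballV finV finite_subset by blast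
    from hall[OF finX this H] obtain f where "inj_on f X" "\<forall>u\<in>X. f u \<in> ball_set n E u r \<inter> Y" by blast
    then have "assignable n E r X Y" unfolding assignable_def by blast
    with Y show False by blast
  qed
  have "rand_subset_prob V q (\<lambda>Y. \<not> assignable n E r X Y)
        \<le> rand_subset_prob V q (\<lambda>Y. \<exists>S\<in>I. card (Y \<inter> NS S) < card S)"
    by (rule rsp_mono) (use q0 A in auto)
  also have "\<dots> \<le> (\<Sum>S\<in>I. rand_subset_prob V q (\<lambda>Y. card (Y \<inter> NS S) < card S))"
    by (rule rsp_union) (use q0 finV finI in auto)
  also have "\<dots> \<le> (\<Sum>S\<in>I. exp (real (card S)) * exp (- q * real (card (NS S)) / 2))"
    by (intro sum_mono rsp_tail) (use q0 finV NSV in auto)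
  also have "\<dots> \<le> (\<Sum>S\<in>I. exp (real (card S) - 6 * (real (card S) * ln (real n)))
                         + exp (real (card S) - 6 * sqrt (real n)))"
  proof (intro sum_mono)
    fix S assume S: "S \<in> I"
    define s where "s = real (card S)"
    have SV: "S \<subseteq> {..<n}" using S X unfolding I_def by blast
    have M: "real (card (NS S)) \<ge> c * min (s * D) (real n)"
      using exp_n SV unfolding NS_def s_def by blast
    have s0: "s \<ge> 0" unfolding s_def by simp
    have ln0: "ln (real n) \<ge> 0" using n3 by simp
    have key: "q * real (card (NS S)) / 2 \<ge> 6 * min (s * ln (real n)) (sqrt (real n))"
    proof -
      have "q * real (card (NS S)) / 2 \<ge> q * (c * min (s * D) (real n)) / 2"
        using M q0 by (simp add: mult_left_mono divide_right_mono)
      also have "q * (c * min (s * D) (real n)) / 2 = (c * C / 2) * (min (s * D) (real n) / sqrt (real n))"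
        unfolding q_def by (simp add: field_simps)
      also have "min (s * D) (real n) / sqrt (real n) \<ge> min (s * ln (real n)) (sqrt (real n))"
      proof -
        have "s * D / sqrt (real n) \<ge> s * ln (real n)"
        proof -
          have "s * D \<ge> s * (sqrt (real n) * ln (real n))" using D s0 by (simp add: mult_left_mono)
          then show ?thesis using sn by (simp add: field_simps)
        qed
        moreover have "real n / sqrt (real n) = sqrt (real n)"
          using sn by (metis real_div_sqrt of_nat_0_le_iff)
        ultimately show ?thesis by (simp add: min_def divide_right_mono) 
      qed
      then have "(c * C / 2) * (min (s * D) (real n) / sqrt (real n)) \<ge> 6 * min (s * ln (real n)) (sqrt (real n))"
      proof -
        assume h: "min (s * ln (real n)) (sqrt (real n)) \<le> min (s * D) (real n) / sqrt (real n)"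
        have m0: "min (s * ln (real n)) (sqrt (real n)) \<ge> 0" using s0 ln0 sn by simp
        have "6 * min (s * ln (real n)) (sqrt (real n)) \<le> (c * C / 2) * min (s * ln (real n)) (sqrt (real n))"
          by (rule mult_right_mono) (use cC m0 in auto)
        also have "\<dots> \<le> (c * C / 2) * (min (s * D) (real n) / sqrt (real n))"
          by (rule mult_left_mono[OF h]) (use cC in auto)
        finally show ?thesis .
      qed
      ultimately show ?thesis by linarith
    qed
    have "exp s * exp (- q * real (card (NS S)) / 2) = exp (s - q * real (card (NS S)) / 2)"
      by (simp add: exp_add[symmetric])
    also have "\<dots> \<le> exp (s - 6 * min (s * ln (real n)) (sqrt (real n)))"
      using key by simp
    also have "\<dots> \<le> exp (s - 6 * (s * ln (real n))) + exp (s - 6 * sqrt (real n))"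
      by (rule exp_min_le) simp
    finally show "exp (real (card S)) * exp (- q * real (card (NS S)) / 2)
          \<le> exp (real (card S) - 6 * (real (card S) * ln (real n))) + exp (real (card S) - 6 * sqrt (real n))"
      unfolding s_def .
  qed
  also have "\<dots> = (\<Sum>S\<in>I. exp (real (card S) - 6 * (real (card S) * ln (real n))))
                + (\<Sum>S\<in>I. exp (real (card S) - 6 * sqrt (real n)))"
    by (rule sum.distrib)
  finally have main: "rand_subset_prob V q (\<lambda>Y. \<not> assignable n E r X Y) \<le> (\<Sum>S\<in>I. exp (real (card S) - 6 * (real (card S) * ln (real n))))
                + (\<Sum>S\<in>I. exp (real (card S) - 6 * sqrt (real n)))" .
  have hA: "(\<Sum>S\<in>I. exp (real (card S) - 6 * (real (card S) * ln (real n))))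
               \<le> exp (2 * exp 1 * sqrt (real n) / real n ^ 6) - 1"
  proof -
    define a where "a = exp 1 / real n ^ 6"
    have a0: "a \<ge> 0" unfolding a_def by simp
    have t: "exp (real k - 6 * (real k * ln (real n))) = a ^ k" for k
    proof -
      have "exp (real k - 6 * (real k * ln (real n))) = exp (real k * (1 - 6 * ln (real n)))"
        by (simp add: algebra_simps)
      also have "\<dots> = exp (1 - 6 * ln (real n)) ^ k" by (rule exp_of_nat_mult)
      also have "exp (1 - 6 * ln (real n)) = a"
      proof -
        have "exp (6 * ln (real n)) = real n ^ 6"
          using n3 by (subst exp_of_nat_mult[of 6, simplified]) simp
        then show ?thesis unfolding a_def by (simp add: exp_diff)
      qed
      finally show ?thesis .
    qed
    have s0: "(\<Sum>S\<in>I. exp (real (card S) - 6 * (real (card S) * ln (real n)))) = (\<Sum>S\<in>I. a ^ card S)"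
      using t by simp
    have s1: "(\<Sum>S\<in>I. a ^ card S) = (\<Sum>S\<in>Pow X. a ^ card S) - 1"
    proof -
      have "(\<Sum>S\<in>Pow X. a ^ card S) = a ^ card ({}::nat set) + (\<Sum>S\<in>I. a ^ card S)"
        unfolding I_def using finX by (subst sum.remove[of _ "{}"]) auto
      then show ?thesis by simp
    qed
    have s2: "(\<Sum>S\<in>Pow X. a ^ card S) = (a + 1) ^ card X"
      using sum_pow_weights[OF finX, of a 1] by simp
    have s3: "(a + 1) ^ card X \<le> exp a ^ card X"
      by (rule power_mono) (use a0 exp_ge_add_one_self[of a] in \<open>auto simp: add.commute\<close>)
    have s4: "exp a ^ card X = exp (real (card X) * a)" by (simp add: exp_of_nat_mult)
    have s5: "exp (real (card X) * a) \<le> exp (2 * exp 1 * sqrt (real n) / real n ^ 6)"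
    proof -
      have "real (card X) * a \<le> 2 * sqrt (real n) * a" using X(2) a0 by (simp add: mult_right_mono)
      also have "2 * sqrt (real n) * a = 2 * exp 1 * sqrt (real n) / real n ^ 6" unfolding a_def by simp
      finally show ?thesis by simp
    qed
    show ?thesis using s0 s1 s2 s3 s4 s5 by linarith
  qed
  have hB: "(\<Sum>S\<in>I. exp (real (card S) - 6 * sqrt (real n))) \<le> exp (- 2 * sqrt (real n))"
  proof -
    have "(\<Sum>S\<in>I. exp (real (card S) - 6 * sqrt (real n))) \<le> (\<Sum>S\<in>I. exp (real (card X) - 6 * sqrt (real n)))"
      by (intro sum_mono) (use finX in \<open>auto simp: I_def card_mono\<close>)
    also have "\<dots> \<le> (\<Sum>S\<in>Pow X. exp (real (card X) - 6 * sqrt (real n)))"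
      by (rule sum_mono2) (use finX in \<open>auto simp: I_def\<close>)
    also have "\<dots> = 2 ^ card X * exp (real (card X) - 6 * sqrt (real n))"
      using finX by (simp add: card_Pow)
    also have "\<dots> \<le> exp 1 ^ card X * exp (real (card X) - 6 * sqrt (real n))"
      by (intro mult_right_mono power_mono) (use exp_ge_add_one_self[of 1] in auto)
    also have "\<dots> = exp (2 * real (card X) - 6 * sqrt (real n))"
      by (simp add: exp_of_nat_mult[symmetric] exp_add[symmetric])
    also have "\<dots> \<le> exp (- 2 * sqrt (real n))" using X(2) by simp
    finally show ?thesis .
  qed
  have "rand_subset_prob V q (\<lambda>Y. \<not> assignable n E r X Y)
     \<le> (exp (2 * exp 1 * sqrt (real n) / real n ^ 6) - 1) + exp (- 2 * sqrt (real n))"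
    using order_trans[OF main add_mono[OF hA hB]] .
  then show ?thesis by (simp only: V_def q_def)
qed



lemma rsp_nonneg: "0 \<le> q \<Longrightarrow> q \<le> 1 \<Longrightarrow> rand_subset_prob V q P \<ge> 0"
  unfolding rand_subset_prob_def by (intro sum_nonneg) auto

theorem lemma2p2:
  fixes E :: "nat \<Rightarrow> nat \<Rightarrow> nat \<Rightarrow> bool"
    and p d :: "nat \<Rightarrow> real"
  assumes graph: "\<And>n. graph_on n (E n)"
    and d_def: "\<And>n. d n = p n * (real n - 1)"
    and d_large: "\<forall>\<^sub>F n in sequentially. d n \<ge> ln (real n) ^ 3"
    and expand: "\<exists>c>0. \<forall>n S r. S \<subseteq> {..<n} \<longrightarrow>
        real (card (\<Union>v\<in>S. ball_set n (E n) v r)) \<ge> c * min (real (card S) * d n ^ r) (real n)"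
    and expand_small: "\<exists>\<epsilon>. \<epsilon> \<longlonglongrightarrow> 0 \<and> (\<forall>n S r. S \<subseteq> {..<n} \<and>
        real (card S) * d n ^ r < real n / ln (real n) \<longrightarrow>
        \<bar>real (card (\<Union>v\<in>S. ball_set n (E n) v r)) - real (card S) * d n ^ r\<bar>
          \<le> \<epsilon> n * (real (card S) * d n ^ r))"
    and disjoint_fam: "\<exists>\<epsilon>. \<epsilon> \<longlonglongrightarrow> 0 \<and> (\<forall>n v r. v < n \<and>
        sqrt (real n) < d n ^ (r + 1) \<and> d n ^ (r + 1) \<le> sqrt (real n) * ln (real n) \<longrightarrow>
        (\<exists>W :: nat \<Rightarrow> nat set.
           (\<forall>u\<in>sphere_set n (E n) v r. W u \<subseteq> sphere_set n (E n) u (r + 1)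
              \<and> \<bar>real (card (W u)) - d n ^ (r + 1)\<bar> \<le> \<epsilon> n * d n ^ (r + 1)) \<and>
           (\<forall>u\<in>sphere_set n (E n) v r. \<forall>u'\<in>sphere_set n (E n) v r.
              u \<noteq> u' \<longrightarrow> W u \<inter> W u' = {})))"
  shows "\<exists>C0. \<forall>C\<ge>C0. \<forall>(X :: nat \<Rightarrow> nat set) (r :: nat \<Rightarrow> nat).
           (\<forall>\<^sub>F n in sequentially. X n \<subseteq> {..<n} \<and> real (card (X n)) \<le> 2 * sqrt (real n)
                 \<and> d n ^ r n \<ge> sqrt (real n) * ln (real n)) \<longrightarrow>
           (\<lambda>n. rand_subset_prob {..<n} (C / sqrt (real n))
                   (\<lambda>Y. \<not> assignable n (E n) (r n) (X n) Y))
             \<in> o(\<lambda>n. 1 / real n ^ 2)"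
proof -
  obtain c where c: "c > 0" and ex: "\<forall>n S r. S \<subseteq> {..<n} \<longrightarrow>
        real (card (\<Union>v\<in>S. ball_set n (E n) v r)) \<ge> c * min (real (card S) * d n ^ r) (real n)"
    using expand by blast
  define g :: "nat \<Rightarrow> real" where
    "g = (\<lambda>n. (exp (2 * exp 1 * sqrt (real n) / real n ^ 6) - 1) + exp (- 2 * sqrt (real n)))"
  have gsmall: "g \<in> o(\<lambda>n. 1 / real n ^ 2)" unfolding g_def by real_asymp
  show ?thesis
  proof (intro exI[of _ "12 / c"] allI impI)
    fix C :: real and X :: "nat \<Rightarrow> nat set" and r :: "nat \<Rightarrow> nat"
    assume C: "C \<ge> 12 / c"
    assume ev: "\<forall>\<^sub>F n in sequentially. X n \<subseteq> {..<n} \<and> real (card (X n)) \<le> 2 * sqrt (real n)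
                 \<and> d n ^ r n \<ge> sqrt (real n) * ln (real n)"
    have cC: "c * C \<ge> 12" using C c by (simp add: field_simps)
    have C0: "C \<ge> 0" using C c by (meson order_trans less_imp_le divide_nonneg_pos zero_le_numeral)
    have evq: "\<forall>\<^sub>F n in sequentially. C / sqrt (real n) \<le> 1"
    proof -
      have "\<forall>\<^sub>F n in sequentially. real n \<ge> C ^ 2 + 1"
        by real_asymp
      then show ?thesis
      proof (rule eventually_mono)
        fix n assume n: "real n \<ge> C ^ 2 + 1"
        have "C \<le> sqrt (real n)"
          using n C0 by (metis real_le_rsqrt add_le_same_cancel1 order_trans zero_le_one le_add_same_cancel1 order.refl)
        moreover have "sqrt (real n) > 0" using n by (smt (verit) real_sqrt_gt_zero zero_le_power2)
        ultimately show "C / sqrt (real n) \<le> 1" by simp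
      qed
    qed
    have ev3: "\<forall>\<^sub>F n in sequentially. n \<ge> 3" by (rule eventually_ge_at_top)
    let ?f = "\<lambda>n. rand_subset_prob {..<n} (C / sqrt (real n)) (\<lambda>Y. \<not> assignable n (E n) (r n) (X n) Y)"
    have bnd: "\<forall>\<^sub>F n in sequentially. norm (?f n) \<le> norm (g n)"
      using ev evq ev3
    proof eventually_elim
      case (elim n)
      have ub: "?f n \<le> g n" unfolding g_def
        by (rule core[where c = c and D = "d n ^ r n"]) (use elim c C0 cC ex in auto)
      have "?f n \<ge> 0" by (rule rsp_nonneg) (use elim C0 in auto)
      then show ?case using ub by simp
    qed
    have "?f \<in> O(g)" using bnd by (rule landau_o.big_mono)
    then show "?f \<in> o(\<lambda>n. 1 / real n ^ 2)" using gsmall by (rule landau_o.big_small_trans)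
  qed
qed


end
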